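(* Let $R$ be a de Groot continuum with two distinct points $b_1,b_2$. Let $Y=(\mathbb{Z}\times R)/\sigma$, where $\mathbb{Z}$ is discrete and $\sigma$ is the equivalence relation whose only nontrivial identifications are $(k,b_2)\sim(k+1,b_1)$ for all $k\in\mathbb{Z}$. Then $Y$ is a connected locally compact space whose homeomorphism group $\mathcal{H}(Y)$ is isomorphic to the infinite cyclic group $\mathbb{Z}$; the isomorphism is given by letting $m\in\mathbb{Z}$ act via $\sigma(k,x)\mapsto\sigma(m+k,x)$.
   Context: A de Groot continuum (rigid continuum) is a compact connected metric space $R$ with more than one point such that every continuous map $R\to R$ is either the identity map or a constant map. $\mathcal{H}(Y)$ denotes the group of all homeomorphisms of a space $Y$ onto itself. The space $Y$ is the realisation of the directed chain $\mathbb{Z}$ (Cayley graph of $(\mathbb{Z},\{1\})$) obtained by inserting a copy of $R$ into each edge $k\to k+1$. *)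

theory Defs
  imports "HOL-Analysis.Analysis" "HOL-Algebra.Elementary_Groups"
begin

definition deGroot_continuum :: "'a topology \<Rightarrow> bool" where
  "deGroot_continuum R \<longleftrightarrow>
     compact_space R \<and> connected_space R \<and> metrizable_space R \<and>
     (\<exists>x y. x \<in> topspace R \<and> y \<in> topspace R \<and> x \<noteq> y) \<and>
     (\<forall>f. continuous_map R R f \<longrightarrow>
          (\<forall>x \<in> topspace R. f x = x) \<or> (\<exists>c. \<forall>x \<in> topspace R. f x = c))"

definition quotient_topology :: "'a topology \<Rightarrow> ('a \<Rightarrow> 'b) \<Rightarrow> 'b topology" where
  "quotient_topology X f =
     topology (\<lambda>U. U \<subseteq> f ` topspace X \<and> openin X {x \<in> topspace X. f x \<in> U})"

definition chain_rel :: "'a topology \<Rightarrow> 'a \<Rightarrow> 'a \<Rightarrow> ((int \<times> 'a) \<times> (int \<times> 'a)) set" where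
  "chain_rel R b1 b2 = {(p, q). p \<in> UNIV \<times> topspace R \<and> q \<in> UNIV \<times> topspace R \<and>
      (p = q \<or> (\<exists>k. p = (k, b2) \<and> q = (k + 1, b1)) \<or> (\<exists>k. p = (k + 1, b1) \<and> q = (k, b2)))}"

text \<open>The quotient map sigma : Z x R -> Y (points of Y are equivalence classes).\<close>
definition chain_proj :: "'a topology \<Rightarrow> 'a \<Rightarrow> 'a \<Rightarrow> int \<times> 'a \<Rightarrow> (int \<times> 'a) set" where
  "chain_proj R b1 b2 p = chain_rel R b1 b2 `` {p}"

definition chain_space :: "'a topology \<Rightarrow> 'a \<Rightarrow> 'a \<Rightarrow> (int \<times> 'a) set topology" where
  "chain_space R b1 b2 =
     quotient_topology (prod_topology (discrete_topology UNIV) R) (chain_proj R b1 b2)"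

definition chain_shift :: "int \<Rightarrow> (int \<times> 'a) set \<Rightarrow> (int \<times> 'a) set" where
  "chain_shift m C = (\<lambda>(k, x). (m + k, x)) ` C"

definition homeo_group :: "'b topology \<Rightarrow> ('b \<Rightarrow> 'b) monoid" where
  "homeo_group Y =
     \<lparr>carrier = {h. homeomorphic_map Y Y h \<and> h \<in> extensional (topspace Y)},
      monoid.mult = (\<lambda>f g. compose (topspace Y) f g),
      one = restrict id (topspace Y)\<rparr>"

end

theory Submission imports Defs begin

lemma group_homeo: "group (homeo_group Z)"
proof (rule groupI)
  fix f g assume f: "f \<in> carrier (homeo_group Z)" and g: "g \<in> carrier (homeo_group Z)"
  have "homeomorphic_map Z Z (f \<circ> g)" using f g homeomorphic_map_compose unfolding homeo_group_def by auto
  then have "homeomorphic_map Z Z (compose (topspace Z) f g)"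
    by (rule homeomorphic_map_eq) (simp add: compose_def)
  then show "f \<otimes>\<^bsub>homeo_group Z\<^esub> g \<in> carrier (homeo_group Z)"
    unfolding homeo_group_def by simp
next
  show "\<one>\<^bsub>homeo_group Z\<^esub> \<in> carrier (homeo_group Z)"
    unfolding homeo_group_def by (simp add: homeomorphic_map_eq[OF homeomorphic_map_id[THEN iffD2]])
next
  fix f g h assume f: "f \<in> carrier (homeo_group Z)" and g: "g \<in> carrier (homeo_group Z)" and h: "h \<in> carrier (homeo_group Z)"
  have "h \<in> topspace Z \<rightarrow> topspace Z" using h homeomorphic_imp_continuous_map unfolding homeo_group_def continuous_map_def by auto
  then show "f \<otimes>\<^bsub>homeo_group Z\<^esub> g \<otimes>\<^bsub>homeo_group Z\<^esub> h = f \<otimes>\<^bsub>homeo_group Z\<^esub> (g \<otimes>\<^bsub>homeo_group Z\<^esub> h)"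
    unfolding homeo_group_def by (simp add: compose_assoc)
next
  fix f assume f: "f \<in> carrier (homeo_group Z)"
  have fp: "f x \<in> topspace Z" if "x \<in> topspace Z" for x using f homeomorphic_imp_continuous_map that unfolding homeo_group_def continuous_map_def by auto
  show "\<one>\<^bsub>homeo_group Z\<^esub> \<otimes>\<^bsub>homeo_group Z\<^esub> f = f"
    using f fp unfolding homeo_group_def by (auto simp: compose_def fun_eq_iff extensional_def)
next
  fix f assume f: "f \<in> carrier (homeo_group Z)"
  then obtain g where g: "homeomorphic_maps Z Z f g" unfolding homeo_group_def homeomorphic_map_maps by auto
  have gh: "homeomorphic_map Z Z g" using g homeomorphic_maps_map by blast
  have fp: "f x \<in> topspace Z" if "x \<in> topspace Z" for x using g that unfolding homeomorphic_maps_def continuous_map_def by auto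
  have "restrict g (topspace Z) \<in> carrier (homeo_group Z)"
    unfolding homeo_group_def using homeomorphic_map_eq[OF gh] by simp
  moreover have "restrict g (topspace Z) \<otimes>\<^bsub>homeo_group Z\<^esub> f = \<one>\<^bsub>homeo_group Z\<^esub>"
    using g fp unfolding homeo_group_def homeomorphic_maps_def by (auto simp: compose_def fun_eq_iff)
  ultimately show "\<exists>y\<in>carrier (homeo_group Z). y \<otimes>\<^bsub>homeo_group Z\<^esub> f = \<one>\<^bsub>homeo_group Z\<^esub>" by blast
qed

locale chainloc =
  fixes R :: "'a topology" and b1 b2 :: 'a
  assumes dG: "deGroot_continuum R"
    and b1: "b1 \<in> topspace R" and b2: "b2 \<in> topspace R" and b12: "b1 \<noteq> b2"
begin

abbreviation "X \<equiv> prod_topology (discrete_topology (UNIV::int set)) R"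
abbreviation "P \<equiv> chain_proj R b1 b2"
abbreviation "Y \<equiv> chain_space R b1 b2"
abbreviation "rel \<equiv> chain_rel R b1 b2"

lemma topX: "topspace X = UNIV \<times> topspace R"
  by simp

lemma istop: "istopology (\<lambda>U. U \<subseteq> P ` topspace X \<and> openin X {x \<in> topspace X. P x \<in> U})"
  unfolding istopology_def
  apply (intro conjI allI impI)
     apply blast
  apply (subgoal_tac "{x \<in> topspace X. P x \<in> S \<inter> T} = {x \<in> topspace X. P x \<in> S} \<inter> {x \<in> topspace X. P x \<in> T}")
    apply (simp add: openin_Int)
   apply blast
  apply blast
  apply (subgoal_tac "{x \<in> topspace X. P x \<in> \<Union>\<K>} = (\<Union>S\<in>\<K>. {x \<in> topspace X. P x \<in> S})")
  apply (simp add: openin_Union)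
  apply blast
  apply blast
  done

lemma openY: "openin Y U \<longleftrightarrow> U \<subseteq> P ` topspace X \<and> openin X {x \<in> topspace X. P x \<in> U}"
  unfolding chain_space_def quotient_topology_def using istop by simp

lemma topY: "topspace Y = P ` topspace X"
proof -
  have "{x \<in> topspace X. P x \<in> P ` topspace X} = topspace X" by blast
  then have "openin Y (P ` topspace X)" unfolding openY using openin_topspace[of X] by (simp add: topX)
  then have "P ` topspace X \<subseteq> topspace Y" by (rule openin_subset)
  moreover have "topspace Y \<subseteq> P ` topspace X" using openY[of "topspace Y"] by simp
  ultimately show ?thesis by blast
qed

lemma contP: "continuous_map X Y P"
  unfolding continuous_map_def topY openY by auto

lemma cont_out:
  assumes "continuous_map X Z (g \<circ> P)"
  shows "continuous_map Y Z g"
  unfolding continuous_map_def Pi_iff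
proof (intro conjI allI impI ballI)
  fix y assume "y \<in> topspace Y"
  then obtain x where "x \<in> topspace X" "y = P x" unfolding topY by blast
  then show "g y \<in> topspace Z" using assms continuous_map_image_subset_topspace[OF assms] by auto
next
  fix U assume "openin Z U"
  then have "openin X {x \<in> topspace X. (g \<circ> P) x \<in> U}" using assms unfolding continuous_map_def by blast
  moreover have "{x \<in> topspace X. P x \<in> {y \<in> topspace Y. g y \<in> U}} = {x \<in> topspace X. (g \<circ> P) x \<in> U}"
    unfolding topY by auto
  ultimately show "openin Y {x \<in> topspace Y. g x \<in> U}" unfolding openY topY by simp
qed

lemma rel_iff:
  assumes "x \<in> topspace R" "z \<in> topspace R"
  shows "((k,x),(a,z)) \<in> rel \<longleftrightarrow> (a = k \<and> z = x) \<or> (x = b2 \<and> a = k+1 \<and> z = b1) \<or> (x = b1 \<and> k = a + 1 \<and> z = b2)"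
  using assms unfolding chain_rel_def by auto

lemma equiv_rel: "equiv (UNIV \<times> topspace R) rel"
  unfolding equiv_def refl_on_def sym_def trans_def chain_rel_def using b12 by auto

lemma P_eq:
  assumes "x \<in> topspace R" "z \<in> topspace R"
  shows "P (k,x) = P (a,z) \<longleftrightarrow> (a = k \<and> z = x) \<or> (x = b2 \<and> a = k+1 \<and> z = b1) \<or> (x = b1 \<and> k = a + 1 \<and> z = b2)"
  unfolding chain_proj_def using equiv_class_eq_iff[OF equiv_rel, of "(k,x)" "(a,z)"] rel_iff[OF assms] assms by auto


lemma topY_iff: "y \<in> topspace Y \<longleftrightarrow> (\<exists>k x. x \<in> topspace R \<and> y = P (k,x))"
  unfolding topY topX by auto

lemma PY: "x \<in> topspace R \<Longrightarrow> P (k,x) \<in> topspace Y"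
  using topY_iff by blast

lemma cont_emb: "continuous_map R Y (\<lambda>x. P (k,x))"
proof -
  have "continuous_map R X (\<lambda>x. (k,x))"
    by (intro continuous_map_pairedI) auto
  then show ?thesis using continuous_map_compose[OF _ contP] by (simp add: o_def)
qed

lemma cont_slices:
  assumes "\<And>k. continuous_map R Z (\<lambda>x. g (k,x))"
  shows "continuous_map X Z g"
  unfolding continuous_map_def Pi_iff
proof (intro conjI allI impI ballI)
  fix p assume "p \<in> topspace X"
  then show "g p \<in> topspace Z" using assms[of "fst p"] unfolding continuous_map_def Pi_iff
    by (cases p) auto
next
  fix U assume U: "openin Z U"
  have e: "{p \<in> topspace X. g p \<in> U} = (\<Union>k. {k} \<times> {x \<in> topspace R. g (k,x) \<in> U})" by auto
  have "openin X ({k} \<times> {x \<in> topspace R. g (k,x) \<in> U})" for k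
    using assms[of k] U unfolding openin_prod_Times_iff continuous_map_def by auto
  then show "openin X {p \<in> topspace X. g p \<in> U}" unfolding e by (intro openin_Union) auto
qed

definition fj :: "int \<Rightarrow> int \<times> 'a \<Rightarrow> 'a" where
  "fj j p = (if fst p < j then b1 else if fst p > j then b2 else snd p)"

definition r :: "int \<Rightarrow> (int \<times> 'a) set \<Rightarrow> 'a" where
  "r j y = fj j (SOME p. p \<in> topspace X \<and> P p = y)"

lemma fj_compat:
  assumes "x \<in> topspace R" "z \<in> topspace R" "P (k,x) = P (a,z)"
  shows "fj j (k,x) = fj j (a,z)"
  using assms(3) unfolding P_eq[OF assms(1,2)] fj_def by auto

lemma r_P: assumes "x \<in> topspace R" shows "r j (P (k,x)) = fj j (k,x)"
proof -
  have "\<exists>p. p \<in> topspace X \<and> P p = P (k,x)" using assms by auto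
  then have s: "(SOME p. p \<in> topspace X \<and> P p = P (k,x)) \<in> topspace X \<and> P (SOME p. p \<in> topspace X \<and> P p = P (k,x)) = P (k,x)"
    by (rule someI_ex)
  obtain a z where az: "(SOME p. p \<in> topspace X \<and> P p = P (k,x)) = (a,z)" by fastforce
  from s have "z \<in> topspace R" "P (a,z) = P (k,x)" unfolding az by auto
  then show ?thesis unfolding r_def az using fj_compat assms by metis
qed

lemma cont_r: "continuous_map Y R (r j)"
proof (rule cont_out)
  have "continuous_map X R (fj j)"
    by (rule cont_slices) (auto simp: fj_def b1 b2)
  then show "continuous_map X R (r j \<circ> P)"
    by (rule continuous_map_eq) (auto simp: r_P)
qed

lemma r_inj:
  assumes "x \<in> topspace R" "z \<in> topspace R" "\<And>j. fj j (k,x) = fj j (a,z)"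
  shows "P (k,x) = P (a,z)"
proof -
  have h1: "fj k (k,x) = fj k (a,z)" "fj a (k,x) = fj a (a,z)" 
    "fj (k+1) (k,x) = fj (k+1) (a,z)" "fj (a+1) (k,x) = fj (a+1) (a,z)" using assms(3) by auto
  show ?thesis unfolding P_eq[OF assms(1,2)]
    using h1 b12 unfolding fj_def by (auto split: if_splits)
qed

lemma dec1:
  assumes "x \<in> topspace R" "x \<noteq> b1" "x \<noteq> b2" "fj j (a,z) = x"
  shows "a = j \<and> z = x"
  using assms unfolding fj_def by (auto split: if_splits)

lemma dec2:
  assumes "z \<in> topspace R" "fj j (a,z) = b1" "fj (j-1) (a,z) = b2"
  shows "P (a,z) = P (j,b1)"
  unfolding P_eq[OF assms(1) b1] using assms b12 unfolding fj_def by (auto split: if_splits)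

lemma dec3:
  assumes "z \<in> topspace R" "fj j (a,z) = b2" "fj (j+1) (a,z) = b1"
  shows "P (a,z) = P (j,b2)"
  unfolding P_eq[OF assms(1) b2] using assms b12 unfolding fj_def by (auto split: if_splits)


lemma third_point: "\<exists>x0. x0 \<in> topspace R \<and> x0 \<noteq> b1 \<and> x0 \<noteq> b2"
proof (rule ccontr)
  assume "\<not> ?thesis"
  then have T: "topspace R = {b1, b2}" using b1 b2 by blast
  have "Hausdorff_space R" using dG metrizable_imp_Hausdorff_space unfolding deGroot_continuum_def by blast
  then have t1: "t1_space R" by (rule Hausdorff_imp_t1_space)
  have c1: "closedin R {b1}" using t1 b1 t1_space_closedin_singleton by metis
  have c2: "closedin R {b2}" using t1 b2 t1_space_closedin_singleton by metis
  have "openin R {b1}"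
  proof -
    have "{b1} = topspace R - {b2}" using T b12 by auto
    then show ?thesis using c2 by (simp add: openin_diff)
  qed
  moreover have "connected_space R" using dG unfolding deGroot_continuum_def by blast
  ultimately show False using c1 T b12 unfolding connected_space_clopen_in by blast
qed

lemma rigid: "continuous_map R R f \<Longrightarrow> (\<forall>x \<in> topspace R. f x = x) \<or> (\<exists>c. \<forall>x \<in> topspace R. f x = c)"
  using dG unfolding deGroot_continuum_def by blast

lemma slice_map:
  assumes hc: "continuous_map Y Y h" and hi: "inj_on h (topspace Y)"
  shows "\<exists>j. \<forall>x\<in>topspace R. h (P (k,x)) = P (j,x)"
proof -
  obtain x0 where x0: "x0 \<in> topspace R" "x0 \<noteq> b1" "x0 \<noteq> b2" using third_point by blast
  define g where "g j = (\<lambda>x. r j (h (P (k,x))))" for j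
  have gc: "continuous_map R R (g j)" for j
  proof -
    have "continuous_map R Y (h \<circ> (\<lambda>x. P (k,x)))" using continuous_map_compose[OF cont_emb hc] .
    then have "continuous_map R R (r j \<circ> (h \<circ> (\<lambda>x. P (k,x))))" using continuous_map_compose[OF _ cont_r] by blast
    then show ?thesis unfolding g_def by (simp add: o_def)
  qed
  have rig: "(\<forall>x\<in>topspace R. g j x = x) \<or> (\<exists>c. \<forall>x\<in>topspace R. g j x = c)" for j
    using rigid[OF gc] .
  have hy: "\<exists>a z. z \<in> topspace R \<and> h (P (k,x)) = P (a,z)" if "x \<in> topspace R" for x
  proof -
    have "h (P (k,x)) \<in> topspace Y" using hc PY[OF that] unfolding continuous_map_def by auto
    then show ?thesis unfolding topY_iff by blast
  qed
  have "\<exists>j. \<forall>x\<in>topspace R. g j x = x"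
  proof (rule ccontr)
    assume "\<not> ?thesis"
    then have eq: "g j b1 = g j x0" for j using rig[of j] b1 x0 by metis
    obtain a z where az: "z \<in> topspace R" "h (P (k,b1)) = P (a,z)" using hy[OF b1] by blast
    obtain a' z' where az': "z' \<in> topspace R" "h (P (k,x0)) = P (a',z')" using hy[OF x0(1)] by blast
    have "fj j (a,z) = fj j (a',z')" for j using eq[of j] unfolding g_def az(2) az'(2) r_P[OF az(1)] r_P[OF az'(1)] .
    then have "P (a,z) = P (a',z')" using r_inj az(1) az'(1) by blast
    then have "h (P (k,b1)) = h (P (k,x0))" using az az' by simp
    then have "P (k,b1) = P (k,x0)" using hi PY[OF b1] PY[OF x0(1)] unfolding inj_on_def by blast
    then show False using P_eq[OF b1 x0(1)] x0 b12 by auto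
  qed
  then obtain j where j: "\<And>x. x \<in> topspace R \<Longrightarrow> g j x = x" by blast
  have gen: "h (P (k,x)) = P (j,x)" if xx: "x \<in> topspace R" "x \<noteq> b1" "x \<noteq> b2" for x
  proof -
    obtain a z where az: "z \<in> topspace R" "h (P (k,x)) = P (a,z)" using hy[OF xx(1)] by blast
    have "fj j (a,z) = x" using j[OF xx(1)] unfolding g_def az(2) r_P[OF az(1)] .
    then have "a = j \<and> z = x" using dec1[OF xx] by blast
    then show ?thesis using az by simp
  qed
  have hx0: "h (P (k,x0)) = P (j,x0)" using gen x0 by blast
  have gm: "g (j-1) b1 = b2"
  proof -
    have "g (j-1) x0 = b2" unfolding g_def hx0 r_P[OF x0(1)] fj_def by simp
    then show ?thesis using rig[of "j-1"] x0 b1 by metis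
  qed
  have gp: "g (j+1) b2 = b1"
  proof -
    have "g (j+1) x0 = b1" unfolding g_def hx0 r_P[OF x0(1)] fj_def by simp
    then show ?thesis using rig[of "j+1"] x0 b2 by metis
  qed
  have "h (P (k,x)) = P (j,x)" if x: "x \<in> topspace R" for x
  proof -
    obtain a z where az: "z \<in> topspace R" "h (P (k,x)) = P (a,z)" using hy[OF x] by blast
    have fx: "fj j (a,z) = x" using j[OF x] unfolding g_def az(2) r_P[OF az(1)] .
    consider "x = b1" | "x = b2" | "x \<noteq> b1 \<and> x \<noteq> b2" by blast
    then show ?thesis
    proof cases
      case 1
      have "g (j-1) x = b2" using gm 1 by simp
      then have "fj (j-1) (a,z) = b2" unfolding g_def az(2) r_P[OF az(1)] .
      then show ?thesis using dec2[OF az(1)] fx 1 az(2) by simp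
    next
      case 2
      have "g (j+1) x = b1" using gp 2 by simp
      then have "fj (j+1) (a,z) = b1" unfolding g_def az(2) r_P[OF az(1)] .
      then show ?thesis using dec3[OF az(1)] fx 2 az(2) by simp
    next
      case 3 then show ?thesis using gen x by blast
    qed
  qed
  then show ?thesis by blast
qed


lemma shift_P: assumes "x \<in> topspace R" shows "chain_shift m (P (k,x)) = P (m+k,x)"
proof
  show "chain_shift m (P (k,x)) \<subseteq> P (m+k,x)"
    unfolding chain_shift_def chain_proj_def chain_rel_def using assms by auto
  show "P (m+k,x) \<subseteq> chain_shift m (P (k,x))"
  proof
    fix q assume q: "q \<in> P (m+k,x)"
    obtain a z where qa: "q = (a,z)" by fastforce
    have "(a - m, z) \<in> P (k,x)" using q unfolding qa chain_proj_def chain_rel_def using assms by auto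
    moreover have "q = (\<lambda>(k, x). (m + k, x)) (a - m, z)" using qa by simp
    ultimately show "q \<in> chain_shift m (P (k,x))" unfolding chain_shift_def by blast
  qed
qed

lemma shift_char:
  assumes hc: "continuous_map Y Y h" and hi: "inj_on h (topspace Y)"
  shows "\<exists>m. \<forall>y\<in>topspace Y. h y = chain_shift m y"
proof -
  have "\<forall>k. \<exists>j. \<forall>x\<in>topspace R. h (P (k,x)) = P (j,x)" using slice_map[OF hc hi] by blast
  then have "\<exists>J. \<forall>k. \<forall>x\<in>topspace R. h (P (k,x)) = P (J k,x)" by (rule choice)
  then obtain J where J0: "\<forall>k. \<forall>x\<in>topspace R. h (P (k,x)) = P (J k,x)" by blast
  have J: "h (P (k,x)) = P (J k,x)" if "x \<in> topspace R" for k x using J0 that by blast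
  have step: "J (k+1) = J k + 1" for k
  proof -
    have e: "P (k,b2) = P (k+1,b1)" using P_eq[OF b2 b1, of k "k+1"] by simp
    have "P (J k,b2) = h (P (k,b2))" using J[OF b2] by simp
    also have "\<dots> = h (P (k+1,b1))" using e by simp
    also have "\<dots> = P (J (k+1),b1)" using J[OF b1] by simp
    finally have "P (J k,b2) = P (J (k+1),b1)" .
    then show ?thesis using P_eq[OF b2 b1, of "J k" "J (k+1)"] b12 by simp
  qed
  have all: "J k = J 0 + k" for k
  proof (induct k rule: int_induct[where k=0])
    case base then show ?case by simp
  next
    case (step1 i) then show ?case using step[of i] by simp
  next
    case (step2 i) then show ?case using step[of "i-1"] by simp
  qed
  show ?thesis
  proof (intro exI ballI)
    fix y assume "y \<in> topspace Y"
    then obtain k x where kx: "x \<in> topspace R" "y = P (k,x)" unfolding topY_iff by blast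
    have "h y = P (J k, x)" using J[OF kx(1)] kx(2) by simp
    also have "\<dots> = P (J 0 + k, x)" using all[of k] by simp
    also have "\<dots> = chain_shift (J 0) y" using shift_P[OF kx(1)] kx(2) by simp
    finally show "h y = chain_shift (J 0) y" .
  qed
qed

lemma shift_Y: "y \<in> topspace Y \<Longrightarrow> chain_shift m y \<in> topspace Y"
  unfolding topY_iff by (metis shift_P)

lemma shift_add: "y \<in> topspace Y \<Longrightarrow> chain_shift (m+n) y = chain_shift m (chain_shift n y)"
  unfolding topY_iff using shift_P by (auto simp: add.assoc)

lemma shift_0: "y \<in> topspace Y \<Longrightarrow> chain_shift 0 y = y"
  unfolding topY_iff using shift_P by auto

lemma cont_shift: "continuous_map Y Y (chain_shift m)"
proof (rule cont_out)
  have "continuous_map X Y (\<lambda>p. P (m + fst p, snd p))"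
    by (rule cont_slices) (simp add: cont_emb)
  then show "continuous_map X Y (chain_shift m \<circ> P)"
    by (rule continuous_map_eq) (auto simp: shift_P topX)
qed

lemma homeo_shift: "homeomorphic_map Y Y (chain_shift m)"
  unfolding homeomorphic_map_maps homeomorphic_maps_def
  by (rule exI[of _ "chain_shift (-m)"]) (auto simp: cont_shift shift_add[symmetric] shift_0)


lemma connY: "connected_space Y"
  unfolding connected_space_clopen_in
proof (intro allI impI)
  fix T assume T: "openin Y T \<and> closedin Y T"
  have cR: "connected_space R" using dG unfolding deGroot_continuum_def by blast
  have sl: "P (k,x) \<in> T \<longleftrightarrow> P (k,b1) \<in> T" if x: "x \<in> topspace R" for k x
  proof -
    let ?S = "{x \<in> topspace R. P (k,x) \<in> T}"
    have "openin R ?S" using openin_continuous_map_preimage[OF cont_emb] T by blast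
    moreover have "closedin R ?S" using closedin_continuous_map_preimage[OF cont_emb] T by blast
    ultimately have "?S = {} \<or> ?S = topspace R" using cR unfolding connected_space_clopen_in by blast
    then show ?thesis using x b1 by blast
  qed
  have adj: "P (k+1,b1) \<in> T \<longleftrightarrow> P (k,b1) \<in> T" for k
  proof -
    have "P (k,b2) = P (k+1,b1)" using P_eq[OF b2 b1] by simp
    then show ?thesis using sl[OF b2, of k] by simp
  qed
  show "T = {} \<or> T = topspace Y"
  proof (cases "T = {}")
    case False
    then obtain y where y: "y \<in> T" by blast
    then have "y \<in> topspace Y" using T openin_subset by blast
    then obtain k0 x0 where kx: "x0 \<in> topspace R" "y = P (k0,x0)" unfolding topY_iff by blast
    have b0: "P (k0,b1) \<in> T" using sl[OF kx(1)] y kx by simp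
    have all: "P (k,b1) \<in> T" for k
    proof (induct k rule: int_induct[where k=k0])
      case base then show ?case by (rule b0)
    next
      case (step1 i) then show ?case using adj[of i] by simp
    next
      case (step2 i) then show ?case using adj[of "i-1"] by simp
    qed
    have "topspace Y \<subseteq> T"
    proof
      fix z assume "z \<in> topspace Y"
      then obtain k x where "x \<in> topspace R" "z = P (k,x)" unfolding topY_iff by blast
      then show "z \<in> T" using sl all by blast
    qed
    then show ?thesis using T openin_subset by blast
  qed simp
qed

lemma lcY: "locally_compact_space Y"
  unfolding locally_compact_space_def
proof
  fix y assume "y \<in> topspace Y"
  then obtain k x where kx: "x \<in> topspace R" "y = P (k,x)" unfolding topY_iff by blast
  have "Hausdorff_space R" using dG metrizable_imp_Hausdorff_space unfolding deGroot_continuum_def by blast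
  then have t1: "t1_space R" by (rule Hausdorff_imp_t1_space)
  have o1: "openin R (topspace R - {b1})" using t1 b1 t1_space_closedin_singleton by (metis openin_diff openin_topspace)
  have o2: "openin R (topspace R - {b2})" using t1 b2 t1_space_closedin_singleton by (metis openin_diff openin_topspace)
  define U where "U = {z \<in> topspace Y. r (k-1) z \<in> topspace R - {b1}} \<inter> {z \<in> topspace Y. r (k+1) z \<in> topspace R - {b2}}"
  define K where "K = P ` ({k-1..k+1} \<times> topspace R)"
  have "openin Y U" unfolding U_def
    by (intro openin_Int openin_continuous_map_preimage[OF cont_r] o1 o2)
  moreover have "compactin Y K"
  proof -
    have "compactin (discrete_topology UNIV) {k-1..k+1}" by (intro finite_imp_compactin) auto
    moreover have "compactin R (topspace R)" using dG unfolding deGroot_continuum_def compact_space_def by blast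
    ultimately have "compactin X ({k-1..k+1} \<times> topspace R)" by (simp add: compactin_Times)
    then show ?thesis unfolding K_def using image_compactin contP by blast
  qed
  moreover have "y \<in> U" unfolding U_def kx(2) using PY[OF kx(1)] r_P[OF kx(1)] b12 b1 b2 by (simp add: fj_def)
  moreover have "U \<subseteq> K"
  proof
    fix z assume z: "z \<in> U"
    then obtain a w where aw: "w \<in> topspace R" "z = P (a,w)" unfolding U_def topY_iff by blast
    have "fj (k-1) (a,w) \<noteq> b1" "fj (k+1) (a,w) \<noteq> b2" using z r_P[OF aw(1)] unfolding U_def aw(2) by auto
    then have "a \<in> {k-1..k+1}" unfolding fj_def by (auto split: if_splits)
    then show "z \<in> K" unfolding K_def aw(2) using aw(1) by blast
  qed
  ultimately show "\<exists>U K. openin Y U \<and> compactin Y K \<and> y \<in> U \<and> U \<subseteq> K" by blast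
qed


lemma iso_shift: "(\<lambda>m. restrict (chain_shift m) (topspace Y)) \<in> iso integer_group (homeo_group Y)"
proof -
  let ?phi = "\<lambda>m. restrict (chain_shift m) (topspace Y)"
  have car: "?phi m \<in> carrier (homeo_group Y)" for m
    unfolding homeo_group_def using homeomorphic_map_eq[OF homeo_shift[of m]] by simp
  have mul: "?phi (m + n) = compose (topspace Y) (?phi m) (?phi n)" for m n
    by (auto simp: fun_eq_iff compose_def shift_add shift_Y)
  have inj: "inj ?phi"
  proof (rule injI)
    fix m n assume e: "?phi m = ?phi n"
    have "?phi m (P (0,b1)) = ?phi n (P (0,b1))" using e by simp
    then have "P (m,b1) = P (n,b1)" using PY[OF b1] shift_P[OF b1] by simp
    then show "m = n" using P_eq[OF b1 b1] b12 by auto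
  qed
  have sur: "?phi ` UNIV = carrier (homeo_group Y)"
  proof
    show "?phi ` UNIV \<subseteq> carrier (homeo_group Y)" using car by blast
    show "carrier (homeo_group Y) \<subseteq> ?phi ` UNIV"
    proof
      fix h assume h: "h \<in> carrier (homeo_group Y)"
      then have hh: "homeomorphic_map Y Y h" "h \<in> extensional (topspace Y)" unfolding homeo_group_def by auto
      obtain m where m: "\<forall>y\<in>topspace Y. h y = chain_shift m y"
        using shift_char[OF homeomorphic_imp_continuous_map[OF hh(1)] homeomorphic_imp_injective_map[OF hh(1)]] by blast
      have "h = ?phi m" by (rule extensionalityI[OF hh(2)]) (auto simp: m)
      then show "h \<in> ?phi ` UNIV" by blast
    qed
  qed
  show ?thesis unfolding iso_def hom_def bij_betw_def
    using car mul inj sur by (auto simp: homeo_group_def)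
qed

end

theorem mainTheorem3:
  fixes R :: "'a topology" and b1 b2 :: 'a
  assumes "deGroot_continuum R"
    and "b1 \<in> topspace R" and "b2 \<in> topspace R" and "b1 \<noteq> b2"
  shows "connected_space (chain_space R b1 b2) \<and>
         locally_compact_space (chain_space R b1 b2) \<and>
         group (homeo_group (chain_space R b1 b2)) \<and>
         (\<lambda>m. restrict (chain_shift m) (topspace (chain_space R b1 b2)))
           \<in> iso integer_group (homeo_group (chain_space R b1 b2))"
proof -
  interpret chainloc R b1 b2 using assms by unfold_locales
  show ?thesis using connY lcY group_homeo iso_shift by blast
qed

end
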